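(* Let $(\Omega,\mathcal A)$ be a measurable space, let $K\subset\mathbb C^n$ be compact and let $A=C(K)$ or $A=P(K)$. Let $f_1,\ldots,f_m:\Omega\times K\to\mathbb C$ each satisfy $f_i(\omega,\cdot)\in A$ for all $\omega$ and $f_i(\cdot,z)$ measurable for all $z\in K$. Then $\omega\mapsto\sigma(f_1(\omega,\cdot),\ldots,f_m(\omega,\cdot))$ is a random compact set in $\mathbb C^m$.
   Context: $P(K)$ is the closure in $C(K)$ (sup norm) of the polynomials. For $h_1,\dots,h_m\in A$ with maximal ideal space $M_A$, the joint spectrum is $\sigma(h_1,\ldots,h_m)=\{(\phi(h_1),\ldots,\phi(h_m)):\phi\in M_A\}$. A random compact set in $\mathbb C^m$ is a measurable map from $\Omega$ to the space of non-empty compact subsets of $\mathbb C^m$ with the Hausdorff distance and its Borel $\sigma$-algebra. *)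

theory Defs
  imports "HOL-Analysis.Analysis"
begin

inductive_set polyfun :: "(complex^'n \<Rightarrow> complex) set" where
  const: "(\<lambda>z. c) \<in> polyfun"
| coord: "(\<lambda>z. z $ i) \<in> polyfun"
| add: "p \<in> polyfun \<Longrightarrow> q \<in> polyfun \<Longrightarrow> (\<lambda>z. p z + q z) \<in> polyfun"
| mult: "p \<in> polyfun \<Longrightarrow> q \<in> polyfun \<Longrightarrow> (\<lambda>z. p z * q z) \<in> polyfun"

definition CK :: "(complex^'n::finite) set \<Rightarrow> (complex^'n \<Rightarrow> complex) set" where
  "CK K = {f. continuous_on K f}"

definition PK :: "(complex^'n::finite) set \<Rightarrow> (complex^'n \<Rightarrow> complex) set" where
  "PK K = {f. \<exists>p::nat \<Rightarrow> complex^_ \<Rightarrow> complex. (\<forall>k. p k \<in> polyfun) \<and>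
              (\<forall>e>0. \<exists>N. \<forall>k\<ge>N. \<forall>z\<in>K. norm (p k z - f z) < e)}"

text \<open>Elements of A are functions on K; two functions agreeing on K are the same element.\<close>
definition characters ::
  "(complex^'n) set \<Rightarrow> (complex^'n \<Rightarrow> complex) set \<Rightarrow> ((complex^'n \<Rightarrow> complex) \<Rightarrow> complex) set" where
  "characters K A = {\<phi>.
     (\<forall>f\<in>A. \<forall>g\<in>A. (\<forall>z\<in>K. f z = g z) \<longrightarrow> \<phi> f = \<phi> g) \<and>
     (\<forall>f\<in>A. \<forall>g\<in>A. \<phi> (\<lambda>z. f z + g z) = \<phi> f + \<phi> g) \<and>
     (\<forall>f\<in>A. \<forall>c. \<phi> (\<lambda>z. c * f z) = c * \<phi> f) \<and>
     (\<forall>f\<in>A. \<forall>g\<in>A. \<phi> (\<lambda>z. f z * g z) = \<phi> f * \<phi> g) \<and>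
     \<phi> (\<lambda>z. 1) = 1}"

definition joint_spectrum ::
  "(complex^'n) set \<Rightarrow> (complex^'n \<Rightarrow> complex) set \<Rightarrow> ('m::finite \<Rightarrow> complex^'n \<Rightarrow> complex)
     \<Rightarrow> (complex^'m) set" where
  "joint_spectrum K A h = {(\<chi> i. \<phi> (h i)) | \<phi>. \<phi> \<in> characters K A}"

definition nonempty_compacts :: "'a::metric_space set set" where
  "nonempty_compacts = {S. compact S \<and> S \<noteq> {}}"

definition hausdorff_dist :: "'a::metric_space set \<Rightarrow> 'a set \<Rightarrow> real" where
  "hausdorff_dist S T = max (SUP x\<in>S. infdist x T) (SUP y\<in>T. infdist y S)"

definition hausdorff_open :: "'a::metric_space set set \<Rightarrow> bool" where
  "hausdorff_open U \<longleftrightarrow> U \<subseteq> nonempty_compacts \<and>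
     (\<forall>S\<in>U. \<exists>e>0. \<forall>T\<in>nonempty_compacts. hausdorff_dist S T < e \<longrightarrow> T \<in> U)"

definition hausdorff_borel :: "'a::metric_space set measure" where
  "hausdorff_borel = sigma nonempty_compacts {U. hausdorff_open U}"

definition random_compact_set :: "'w measure \<Rightarrow> ('w \<Rightarrow> 'a::metric_space set) \<Rightarrow> bool" where
  "random_compact_set M X \<longleftrightarrow> X \<in> measurable M hausdorff_borel"

end

theory Submission
  imports Defs
begin

lemma vec_measurable:
  fixes g :: "'m::finite \<Rightarrow> 'w \<Rightarrow> complex"
  assumes "\<And>i. g i \<in> borel_measurable M"
  shows "(\<lambda>\<omega>. \<chi> i. g i \<omega>) \<in> borel_measurable M"
proof -
  have e: "(\<lambda>\<omega>. \<chi> i. g i \<omega>) = (\<lambda>\<omega>. \<Sum>i\<in>UNIV. axis i (g i \<omega>))"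
    by (auto simp: vec_eq_iff axis_def sum.If_cases)
  have c: "continuous_on UNIV (\<lambda>c::complex. axis i c :: complex^'m)" for i
    by (intro linear_continuous_on bounded_linearI') (auto simp: axis_def vec_eq_iff)
  show ?thesis unfolding e
    by (intro borel_measurable_sum borel_measurable_continuous_on[OF c] assms)
qed

lemma bdd_above_infdist_compact:
  assumes "compact S"
  shows "bdd_above ((\<lambda>x. infdist x T) ` S)"
proof -
  have "compact ((\<lambda>x. infdist x T) ` S)"
    by (intro compact_continuous_image continuous_intros assms)
  then show ?thesis by (intro bounded_imp_bdd_above compact_imp_bounded)
qed

lemma hd_sym: "hausdorff_dist S T = hausdorff_dist T S"
  unfolding hausdorff_dist_def by (simp add: max.commute)

lemma hd_le_iff:
  assumes "compact S" "S \<noteq> {}" "compact T" "T \<noteq> {}"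
  shows "hausdorff_dist S T \<le> r \<longleftrightarrow> (\<forall>x\<in>S. infdist x T \<le> r) \<and> (\<forall>y\<in>T. infdist y S \<le> r)"
  unfolding hausdorff_dist_def
  using assms bdd_above_infdist_compact[OF assms(1), of T] bdd_above_infdist_compact[OF assms(3), of S]
  by (simp add: cSUP_le_iff)

lemma hd_ge:
  assumes "compact S" "S \<noteq> {}" "compact T" "T \<noteq> {}"
  shows "x \<in> S \<Longrightarrow> infdist x T \<le> hausdorff_dist S T"
    and "y \<in> T \<Longrightarrow> infdist y S \<le> hausdorff_dist S T"
  using hd_le_iff[OF assms, of "hausdorff_dist S T"] by auto

lemma infdist_through:
  assumes "B \<noteq> {}" "\<And>y. y \<in> B \<Longrightarrow> infdist y C \<le> c"
  shows "infdist x C \<le> infdist x B + c"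
proof -
  have "infdist x C - c \<le> infdist x B"
    unfolding infdist_notempty[OF assms(1)]
  proof (rule cINF_greatest)
    fix y assume "y \<in> B"
    have "infdist x C \<le> infdist y C + dist x y" by (rule infdist_triangle)
    with assms(2)[OF \<open>y\<in>B\<close>] show "infdist x C - c \<le> dist x y" by simp
  qed (use assms in auto)
  then show ?thesis by simp
qed

lemma hd_triangle:
  assumes "compact A" "A \<noteq> {}" "compact B" "B \<noteq> {}" "compact C" "C \<noteq> {}"
  shows "hausdorff_dist A C \<le> hausdorff_dist A B + hausdorff_dist B C"
proof (subst hd_le_iff[OF assms(1,2,5,6)], intro conjI ballI)
  fix x assume "x \<in> A"
  have "infdist x C \<le> infdist x B + hausdorff_dist B C"
    by (rule infdist_through) (use assms hd_ge[OF assms(3-6)] in auto)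
  also have "\<dots> \<le> hausdorff_dist A B + hausdorff_dist B C"
    using hd_ge(1)[OF assms(1-4) \<open>x\<in>A\<close>] by simp
  finally show "infdist x C \<le> hausdorff_dist A B + hausdorff_dist B C" .
next
  fix z assume "z \<in> C"
  have "infdist z A \<le> infdist z B + hausdorff_dist A B"
    by (rule infdist_through) (use assms hd_ge[OF assms(1-4)] in auto)
  also have "\<dots> \<le> hausdorff_dist A B + hausdorff_dist B C"
    using hd_ge(2)[OF assms(3-6) \<open>z\<in>C\<close>] by simp
  finally show "infdist z A \<le> hausdorff_dist A B + hausdorff_dist B C" .
qed

lemma hd_approx:
  fixes S :: "'b::metric_space set"
  assumes "compact S" "S \<noteq> {}" "e > 0"
    and D: "\<And>X. open X \<Longrightarrow> X \<noteq> {} \<Longrightarrow> \<exists>d\<in>D. d \<in> X"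
  obtains T where "finite T" "T \<subseteq> D" "T \<noteq> {}" "hausdorff_dist S T \<le> e"
proof -
  obtain F where F: "F \<subseteq> S" "finite F" "S \<subseteq> (\<Union>x\<in>F. ball x (e/2))"
    using compactE_image[OF assms(1), of S "\<lambda>x. ball x (e/2)"] assms(3) by force
  have "\<forall>x. \<exists>d\<in>D. d \<in> ball x (e/2)"
    using D[of "ball x (e/2)" for x] assms(3) by auto
  then obtain q where q: "\<And>x. q x \<in> D" "\<And>x. dist x (q x) < e/2"
    by (metis mem_ball)
  have Fne: "F \<noteq> {}" using F assms(2) by auto
  define T where "T = q ` F"
  have T: "finite T" "T \<subseteq> D" "T \<noteq> {}" "compact T"
    using F Fne q by (auto simp: T_def intro: finite_imp_compact)
  have "hausdorff_dist S T \<le> e"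
  proof (subst hd_le_iff[OF assms(1,2) T(4,3)], intro conjI ballI)
    fix y assume "y \<in> S"
    then obtain x where x: "x \<in> F" "dist x y < e/2" using F by auto
    have "dist y (q x) \<le> dist y x + dist x (q x)" by (rule dist_triangle)
    also have "\<dots> \<le> e" using x q(2)[of x] by (simp add: dist_commute)
    finally show "infdist y T \<le> e"
      using x by (intro infdist_le2[of "q x"]) (auto simp: T_def)
  next
    fix t assume "t \<in> T"
    then obtain x where x: "x \<in> F" "t = q x" by (auto simp: T_def)
    have "dist t x = dist x (q x)" using x(2) by (simp add: dist_commute)
    moreover have "0 \<le> dist x (q x)" by simp
    ultimately have "dist t x \<le> e" using q(2)[of x] by linarith
    then show "infdist t S \<le> e"
      using x F by (intro infdist_le2[of x]) auto
  qed
  with T that show ?thesis by blast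
qed


lemma SUP_INF_dense:
  fixes g :: "'a::metric_space \<Rightarrow> real"
  assumes L: "compact L" "DL \<subseteq> L" "L \<subseteq> closure DL" "DL \<noteq> {}" and g: "continuous_on L g"
  shows "(SUP w\<in>L. g w) = (SUP d\<in>DL. g d)" and "(INF w\<in>L. g w) = (INF d\<in>DL. g d)"
proof -
  have Lne: "L \<noteq> {}" using L by auto
  have bL: "bounded (g ` L)" by (intro compact_imp_bounded compact_continuous_image g L)
  have bD: "bounded (g ` DL)" by (rule bounded_subset[OF bL]) (use L in auto)
  have cl: "closure DL \<subseteq> L" using L by (simp add: closure_minimal compact_imp_closed)
  have gc: "continuous_on (closure DL) g" by (rule continuous_on_subset[OF g cl])
  have up: "g ` closure DL \<subseteq> {..(SUP d\<in>DL. g d)}"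
    by (rule image_closure_subset[OF gc]) (use bD in \<open>auto intro!: cSUP_upper bounded_imp_bdd_above\<close>)
  have lo: "g ` closure DL \<subseteq> {(INF d\<in>DL. g d)..}"
    by (rule image_closure_subset[OF gc]) (use bD in \<open>auto intro!: cINF_lower bounded_imp_bdd_below\<close>)
  show "(SUP w\<in>L. g w) = (SUP d\<in>DL. g d)"
  proof (rule antisym)
    show "(SUP w\<in>L. g w) \<le> (SUP d\<in>DL. g d)"
      by (rule cSUP_least[OF Lne]) (use up L in auto)
    show "(SUP d\<in>DL. g d) \<le> (SUP w\<in>L. g w)"
      by (rule cSUP_subset_mono) (use L bL in \<open>auto intro: bounded_imp_bdd_above\<close>)
  qed
  show "(INF w\<in>L. g w) = (INF d\<in>DL. g d)"
  proof (rule antisym)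
    show "(INF d\<in>DL. g d) \<le> (INF w\<in>L. g w)"
      by (rule cINF_greatest[OF Lne]) (use lo L in auto)
    show "(INF w\<in>L. g w) \<le> (INF d\<in>DL. g d)"
      by (rule cINF_superset_mono) (use L bL in \<open>auto intro: bounded_imp_bdd_below\<close>)
  qed
qed

lemma hd_meas:
  fixes \<Phi> :: "'w \<Rightarrow> 'a::{metric_space,second_countable_topology} \<Rightarrow> 'b::metric_space"
  assumes L: "compact L" "L \<noteq> {}"
    and cont: "\<And>\<omega>. \<omega> \<in> space M \<Longrightarrow> continuous_on L (\<Phi> \<omega>)"
    and meas: "\<And>w. w \<in> L \<Longrightarrow> (\<lambda>\<omega>. \<Phi> \<omega> w) \<in> borel_measurable M"
    and T: "finite T" "T \<noteq> {}"
  shows "(\<lambda>\<omega>. hausdorff_dist (\<Phi> \<omega> ` L) T) \<in> borel_measurable M"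
proof -
  obtain DL where DL: "countable DL" "DL \<subseteq> L" "L \<subseteq> closure DL"
    using separable[of L] by blast
  have DLne: "DL \<noteq> {}" using DL L by auto
  have eq: "hausdorff_dist (\<Phi> \<omega> ` L) T =
      max (SUP d\<in>DL. infdist (\<Phi> \<omega> d) T) (SUP t\<in>T. INF d\<in>DL. dist t (\<Phi> \<omega> d))"
    if \<omega>: "\<omega> \<in> space M" for \<omega>
  proof -
    have c1: "continuous_on L (\<lambda>w. infdist (\<Phi> \<omega> w) T)"
      by (intro continuous_intros cont \<omega>)
    have c2: "continuous_on L (\<lambda>w. dist t (\<Phi> \<omega> w))" for t
      by (intro continuous_intros cont \<omega>)
    have "(SUP x\<in>\<Phi> \<omega> ` L. infdist x T) = (SUP w\<in>L. infdist (\<Phi> \<omega> w) T)"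
      by (simp add: image_comp o_def)
    also have "\<dots> = (SUP d\<in>DL. infdist (\<Phi> \<omega> d) T)"
      by (rule SUP_INF_dense(1)[OF L(1) DL(2,3) DLne c1])
    finally have A: "(SUP x\<in>\<Phi> \<omega> ` L. infdist x T) = (SUP d\<in>DL. infdist (\<Phi> \<omega> d) T)" .
    have B: "infdist t (\<Phi> \<omega> ` L) = (INF d\<in>DL. dist t (\<Phi> \<omega> d))" for t
    proof -
      have "infdist t (\<Phi> \<omega> ` L) = (INF w\<in>L. dist t (\<Phi> \<omega> w))"
        using L by (simp add: infdist_notempty image_comp o_def)
      also have "\<dots> = (INF d\<in>DL. dist t (\<Phi> \<omega> d))"
        by (rule SUP_INF_dense(2)[OF L(1) DL(2,3) DLne c2])
      finally show ?thesis .
    qed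
    show ?thesis unfolding hausdorff_dist_def A B by simp
  qed
  have m1: "(\<lambda>\<omega>. SUP d\<in>DL. infdist (\<Phi> \<omega> d) T) \<in> borel_measurable M"
  proof (rule borel_measurable_cSUP[OF DL(1)])
    fix d assume "d \<in> DL"
    then have "(\<lambda>\<omega>. \<Phi> \<omega> d) \<in> borel_measurable M" using DL meas by auto
    then show "(\<lambda>\<omega>. infdist (\<Phi> \<omega> d) T) \<in> borel_measurable M"
      by (rule borel_measurable_continuous_on[rotated]) (intro continuous_intros)
  next
    fix \<omega> assume \<omega>: "\<omega> \<in> space M"
    have "bounded ((\<lambda>w. infdist (\<Phi> \<omega> w) T) ` L)"
      by (intro compact_imp_bounded compact_continuous_image continuous_intros cont \<omega> L)
    then have "bounded ((\<lambda>w. infdist (\<Phi> \<omega> w) T) ` DL)"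
      by (rule bounded_subset) (use DL in auto)
    then show "bdd_above ((\<lambda>d. infdist (\<Phi> \<omega> d) T) ` DL)" by (rule bounded_imp_bdd_above)
  qed
  have m2: "(\<lambda>\<omega>. SUP t\<in>T. INF d\<in>DL. dist t (\<Phi> \<omega> d)) \<in> borel_measurable M"
  proof (rule borel_measurable_cSUP)
    show "countable T" using T by (simp add: countable_finite)
    fix t
    show "(\<lambda>\<omega>. INF d\<in>DL. dist t (\<Phi> \<omega> d)) \<in> borel_measurable M"
    proof (rule borel_measurable_cINF[OF DL(1)])
      fix d assume "d \<in> DL"
      then have "(\<lambda>\<omega>. \<Phi> \<omega> d) \<in> borel_measurable M" using DL meas by auto
      then show "(\<lambda>\<omega>. dist t (\<Phi> \<omega> d)) \<in> borel_measurable M"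
        by (rule borel_measurable_continuous_on[rotated]) (intro continuous_intros)
    next
      fix \<omega> show "bdd_below ((\<lambda>d. dist t (\<Phi> \<omega> d)) ` DL)"
        by (rule bdd_belowI[of _ 0]) auto
    qed
  next
    fix \<omega> show "bdd_above ((\<lambda>t. INF d\<in>DL. dist t (\<Phi> \<omega> d)) ` T)"
      using T by simp
  qed
  have "(\<lambda>\<omega>. max (SUP d\<in>DL. infdist (\<Phi> \<omega> d) T) (SUP t\<in>T. INF d\<in>DL. dist t (\<Phi> \<omega> d)))
        \<in> borel_measurable M"
    by (intro borel_measurable_max m1 m2)
  then show ?thesis by (subst measurable_cong[OF eq]) auto
qed


lemma image_measurable_hausdorff:
  fixes \<Phi> :: "'w \<Rightarrow> 'a::{metric_space,second_countable_topology} \<Rightarrow> 'b::{metric_space,second_countable_topology}"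
  assumes L: "compact L" "L \<noteq> {}"
    and cont: "\<And>\<omega>. \<omega> \<in> space M \<Longrightarrow> continuous_on L (\<Phi> \<omega>)"
    and meas: "\<And>w. w \<in> L \<Longrightarrow> (\<lambda>\<omega>. \<Phi> \<omega> w) \<in> borel_measurable M"
  shows "(\<lambda>\<omega>. \<Phi> \<omega> ` L) \<in> measurable M hausdorff_borel"
  unfolding hausdorff_borel_def
proof (rule measurable_measure_of)
  show "{U. hausdorff_open U} \<subseteq> Pow nonempty_compacts"
    by (auto simp: hausdorff_open_def)
  have X: "\<Phi> \<omega> ` L \<in> nonempty_compacts" if "\<omega> \<in> space M" for \<omega>
    using L cont[OF that] by (auto simp: nonempty_compacts_def intro: compact_continuous_image)
  then show "(\<lambda>\<omega>. \<Phi> \<omega> ` L) \<in> space M \<rightarrow> nonempty_compacts" by auto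
  fix U :: "'b set set" assume "U \<in> {U. hausdorff_open U}"
  then have U: "U \<subseteq> nonempty_compacts"
    "\<And>S. S \<in> U \<Longrightarrow> \<exists>e>0. \<forall>T\<in>nonempty_compacts. hausdorff_dist S T < e \<longrightarrow> T \<in> U"
    by (auto simp: hausdorff_open_def)
  obtain Dq :: "'b set" where Dq: "countable Dq" "\<And>X. open X \<Longrightarrow> X \<noteq> {} \<Longrightarrow> \<exists>d\<in>Dq. d \<in> X"
    using countable_dense_setE by blast
  define I where "I = {(T,r). T \<in> {T. finite T \<and> T \<subseteq> Dq} \<and> T \<noteq> {} \<and> r \<in> \<rat> \<and>
      (\<forall>S\<in>nonempty_compacts. hausdorff_dist S T < r \<longrightarrow> S \<in> U)}"
  have cI: "countable I"
  proof (rule countable_subset)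
    show "I \<subseteq> {T. finite T \<and> T \<subseteq> Dq} \<times> \<rat>" by (auto simp: I_def)
    show "countable ({T. finite T \<and> T \<subseteq> Dq} \<times> \<rat>)"
      by (intro countable_SIGMA countable_Collect_finite_subset Dq countable_rat)
  qed
  have eq: "(\<lambda>\<omega>. \<Phi> \<omega> ` L) -` U \<inter> space M =
      (\<Union>(T,r)\<in>I. {\<omega>\<in>space M. hausdorff_dist (\<Phi> \<omega> ` L) T < r})"
  proof (intro equalityI subsetI)
    fix \<omega> assume "\<omega> \<in> (\<lambda>\<omega>. \<Phi> \<omega> ` L) -` U \<inter> space M"
    then have \<omega>: "\<omega> \<in> space M" "\<Phi> \<omega> ` L \<in> U" by auto
    define S where "S = \<Phi> \<omega> ` L"
    have S: "compact S" "S \<noteq> {}" using X[OF \<omega>(1)] by (auto simp: S_def nonempty_compacts_def)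
    obtain e where e: "e > 0" "\<And>T. T\<in>nonempty_compacts \<Longrightarrow> hausdorff_dist S T < e \<Longrightarrow> T \<in> U"
      using U(2)[OF \<omega>(2)] unfolding S_def by blast
    obtain T where T: "finite T" "T \<subseteq> Dq" "T \<noteq> {}" "hausdorff_dist S T \<le> e/4"
      using hd_approx[OF S, of "e/4" Dq] e Dq by auto
    have Tc: "compact T" using T by (simp add: finite_imp_compact)
    obtain r where r: "r \<in> \<rat>" "e/4 < r" "r < e/2"
      using Rats_dense_in_real[of "e/4" "e/2"] e by auto
    have "\<forall>S'\<in>nonempty_compacts. hausdorff_dist S' T < r \<longrightarrow> S' \<in> U"
    proof (intro ballI impI)
      fix S' assume S': "S' \<in> nonempty_compacts" "hausdorff_dist S' T < r"
      have S'c: "compact S'" "S' \<noteq> {}" using S' by (auto simp: nonempty_compacts_def)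
      have "hausdorff_dist S S' \<le> hausdorff_dist S T + hausdorff_dist T S'"
        by (rule hd_triangle) (use S S'c T Tc in auto)
      also have "\<dots> < e" using T(4) S'(2) r by (simp add: hd_sym[of T S'])
      finally show "S' \<in> U" using e(2)[OF S'(1)] by simp
    qed
    then have "(T, r) \<in> I" unfolding I_def using T r by simp
    moreover have "hausdorff_dist (\<Phi> \<omega> ` L) T < r" using T(4) r unfolding S_def by simp
    ultimately show "\<omega> \<in> (\<Union>(T,r)\<in>I. {\<omega>\<in>space M. hausdorff_dist (\<Phi> \<omega> ` L) T < r})"
      using \<omega> by blast
  next
    fix \<omega> assume "\<omega> \<in> (\<Union>(T,r)\<in>I. {\<omega>\<in>space M. hausdorff_dist (\<Phi> \<omega> ` L) T < r})"
    then obtain T r where "(T,r) \<in> I" "\<omega> \<in> space M" "hausdorff_dist (\<Phi> \<omega> ` L) T < r" by auto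
    then show "\<omega> \<in> (\<lambda>\<omega>. \<Phi> \<omega> ` L) -` U \<inter> space M"
      using X unfolding I_def by auto
  qed
  have "(\<Union>(T,r)\<in>I. {\<omega>\<in>space M. hausdorff_dist (\<Phi> \<omega> ` L) T < r}) \<in> sets M"
  proof (rule sets.countable_UN''[OF cI])
    fix i assume "i \<in> I"
    then obtain T r where i: "i = (T, r)" "finite T" "T \<noteq> {}" by (auto simp: I_def)
    have [measurable]: "(\<lambda>\<omega>. hausdorff_dist (\<Phi> \<omega> ` L) T) \<in> borel_measurable M"
      by (rule hd_meas[OF L cont meas i(2,3)])
    show "(case i of (T, r) \<Rightarrow> {\<omega> \<in> space M. hausdorff_dist (\<Phi> \<omega> ` L) T < r}) \<in> sets M"
    proof -
      have "{\<omega> \<in> space M. hausdorff_dist (\<Phi> \<omega> ` L) T < r} \<in> sets M" by measurable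
      then show ?thesis by (simp add: i)
    qed
  qed
  then show "(\<lambda>\<omega>. \<Phi> \<omega> ` L) -` U \<inter> space M \<in> sets M" using eq by simp
qed


lemma char_props:
  assumes "\<phi> \<in> characters K A"
  shows "\<And>f g. f \<in> A \<Longrightarrow> g \<in> A \<Longrightarrow> (\<forall>z\<in>K. f z = g z) \<Longrightarrow> \<phi> f = \<phi> g"
    and "\<And>f g. f \<in> A \<Longrightarrow> g \<in> A \<Longrightarrow> \<phi> (\<lambda>z. f z + g z) = \<phi> f + \<phi> g"
    and "\<And>f c. f \<in> A \<Longrightarrow> \<phi> (\<lambda>z. c * f z) = c * \<phi> f"
    and "\<And>f g. f \<in> A \<Longrightarrow> g \<in> A \<Longrightarrow> \<phi> (\<lambda>z. f z * g z) = \<phi> f * \<phi> g"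
    and "\<phi> (\<lambda>z. 1) = 1"
  using assms unfolding characters_def by blast+

lemma char_const:
  assumes "\<phi> \<in> characters K A" "(\<lambda>z. 1) \<in> A"
  shows "\<phi> (\<lambda>z. c) = c"
proof -
  have "\<phi> (\<lambda>z. c * 1) = c * \<phi> (\<lambda>z. 1)" by (rule char_props(3)[OF assms])
  then show ?thesis using char_props(5)[OF assms(1)] by simp
qed

lemma char_sum:
  assumes "\<phi> \<in> characters K A" "(\<lambda>z. 1) \<in> A"
    and cl: "\<And>f g. f \<in> A \<Longrightarrow> g \<in> A \<Longrightarrow> (\<lambda>z. f z + g z) \<in> A" "(\<lambda>z. 0) \<in> A"
    and "finite F" "\<And>x. x \<in> F \<Longrightarrow> w x \<in> A"
  shows "\<phi> (\<lambda>y. \<Sum>x\<in>F. w x y) = (\<Sum>x\<in>F. \<phi> (w x))" and "(\<lambda>y. \<Sum>x\<in>F. w x y) \<in> A"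
proof -
  have "\<phi> (\<lambda>y. \<Sum>x\<in>F. w x y) = (\<Sum>x\<in>F. \<phi> (w x)) \<and> (\<lambda>y. \<Sum>x\<in>F. w x y) \<in> A"
    using assms(5,6)
  proof (induction F rule: finite_induct)
    case empty
    then show ?case using char_const[OF assms(1,2), of 0] cl by simp
  next
    case (insert x F)
    then have IH: "\<phi> (\<lambda>y. \<Sum>x\<in>F. w x y) = (\<Sum>x\<in>F. \<phi> (w x))" "(\<lambda>y. \<Sum>x\<in>F. w x y) \<in> A"
      and wx: "w x \<in> A" by auto
    have "\<phi> (\<lambda>y. w x y + (\<Sum>x\<in>F. w x y)) = \<phi> (w x) + \<phi> (\<lambda>y. \<Sum>x\<in>F. w x y)"
      using char_props(2)[OF assms(1) wx IH(2)] by simp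
    moreover have "(\<lambda>y. w x y + (\<Sum>x\<in>F. w x y)) \<in> A" using cl(1)[OF wx IH(2)] by simp
    ultimately show ?case using insert IH by simp
  qed
  then show "\<phi> (\<lambda>y. \<Sum>x\<in>F. w x y) = (\<Sum>x\<in>F. \<phi> (w x))" "(\<lambda>y. \<Sum>x\<in>F. w x y) \<in> A" by auto
qed

lemma CK_add: "f \<in> CK K \<Longrightarrow> g \<in> CK K \<Longrightarrow> (\<lambda>z. f z + g z) \<in> CK K"
  unfolding CK_def by (simp add: continuous_on_add)
lemma CK_mult: "f \<in> CK K \<Longrightarrow> g \<in> CK K \<Longrightarrow> (\<lambda>z. f z * g z) \<in> CK K"
  unfolding CK_def by (simp add: continuous_on_mult)
lemma CK_const: "(\<lambda>z. c) \<in> CK K"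
  unfolding CK_def by (simp add: continuous_on_const)
lemma CK_cnj: "f \<in> CK K \<Longrightarrow> (\<lambda>z. cnj (f z)) \<in> CK K"
  unfolding CK_def by (simp add: continuous_on_cnj)

lemma CK_char_point:
  assumes K: "compact K" "K \<noteq> {}" and \<phi>: "\<phi> \<in> characters K (CK K)"
  shows "\<exists>z\<in>K. \<forall>g\<in>CK K. \<phi> g = g z"
proof (rule ccontr)
  assume "\<not> ?thesis"
  then have "\<forall>z\<in>K. \<exists>g. g \<in> CK K \<and> \<phi> g \<noteq> g z" by auto
  then obtain G where G: "\<And>z. z \<in> K \<Longrightarrow> G z \<in> CK K" "\<And>z. z \<in> K \<Longrightarrow> \<phi> (G z) \<noteq> G z z"
    by metis
  have one: "(\<lambda>z. 1) \<in> CK K" by (simp add: CK_def)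
  define u where "u z = (\<lambda>y. G z y + (-\<phi> (G z)) * 1)" for z
  have u: "u z \<in> CK K" "\<phi> (u z) = 0" "u z z \<noteq> 0" if "z \<in> K" for z
  proof -
    show uc: "u z \<in> CK K" using G(1)[OF that] unfolding u_def by (intro CK_add CK_const)
    have "\<phi> (u z) = \<phi> (G z) + \<phi> (\<lambda>y. (-\<phi> (G z)) * 1)"
      unfolding u_def by (rule char_props(2)[OF \<phi> G(1)[OF that]]) (simp add: CK_def)
    also have "\<phi> (\<lambda>y. (-\<phi> (G z)) * 1) = - \<phi> (G z)"
      using char_props(3)[OF \<phi> one, of "-\<phi> (G z)"] char_props(5)[OF \<phi>] by simp
    finally show "\<phi> (u z) = 0" by simp
    show "u z z \<noteq> 0" using G(2)[OF that] by (simp add: u_def)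
  qed
  have "\<exists>V. open V \<and> V \<inter> K = u z -` (-{0}) \<inter> K" if "z \<in> K" for z
    using u(1)[OF that] unfolding CK_def continuous_on_open_invariant by (simp add: open_Compl)
  then obtain V where V: "\<And>z. z \<in> K \<Longrightarrow> open (V z)"
      "\<And>z. z \<in> K \<Longrightarrow> V z \<inter> K = u z -` (-{0}) \<inter> K" by metis
  have "K \<subseteq> (\<Union>z\<in>K. V z)" using V u(3) by blast
  then obtain F where F: "F \<subseteq> K" "finite F" "K \<subseteq> (\<Union>z\<in>F. V z)"
    using compactE_image[OF K(1), of K V] V(1) by metis
  define w where "w z = (\<lambda>y. u z y * cnj (u z y))" for z
  have wA: "w z \<in> CK K" if "z \<in> K" for z
    using u(1)[OF that] unfolding w_def by (intro CK_mult CK_cnj)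
  have w0: "\<phi> (w z) = 0" if "z \<in> K" for z
  proof -
    have "(\<lambda>y. cnj (u z y)) \<in> CK K" using u(1)[OF that] by (rule CK_cnj)
    then have "\<phi> (w z) = \<phi> (u z) * \<phi> (\<lambda>y. cnj (u z y))"
      unfolding w_def by (rule char_props(4)[OF \<phi> u(1)[OF that]])
    then show ?thesis using u(2)[OF that] by simp
  qed
  define s where "s = (\<lambda>y. \<Sum>z\<in>F. w z y)"
  have cl: "\<And>f g. f \<in> CK K \<Longrightarrow> g \<in> CK K \<Longrightarrow> (\<lambda>z. f z + g z) \<in> CK K" "(\<lambda>z. 0) \<in> CK K"
    by (auto intro: CK_add CK_const)
  have wF: "\<And>z. z \<in> F \<Longrightarrow> w z \<in> CK K" using wA F(1) by blast
  have sA: "s \<in> CK K" unfolding s_def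
    by (rule char_sum(2)[OF \<phi> one _ CK_const F(2)]) (auto intro: CK_add wF)
  have "\<phi> s = (\<Sum>x\<in>F. \<phi> (w x))" unfolding s_def
    by (rule char_sum(1)[OF \<phi> one _ CK_const F(2)]) (auto intro: CK_add wF)
  also have "\<dots> = 0" by (rule sum.neutral) (use w0 F(1) in blast)
  finally have s0: "\<phi> s = 0" .
  have spos: "s y \<noteq> 0" if "y \<in> K" for y
  proof -
    obtain z where z: "z \<in> F" "y \<in> V z" using F(3) \<open>y \<in> K\<close> by blast
    then have uz: "u z y \<noteq> 0" using V(2)[of z] F(1) that by auto
    have "s y = of_real (\<Sum>z\<in>F. (cmod (u z y))\<^sup>2)"
      unfolding s_def w_def of_real_sum by (rule sum.cong) (simp_all only: complex_norm_square[symmetric] of_real_power)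
    moreover have "(\<Sum>z\<in>F. (cmod (u z y))\<^sup>2) > 0"
    proof -
      have "(\<Sum>z\<in>F. (cmod (u z y))\<^sup>2) \<ge> (cmod (u z y))\<^sup>2"
        by (rule member_le_sum) (use z F in auto)
      moreover have "(cmod (u z y))\<^sup>2 > 0" using uz by simp
      ultimately show ?thesis by linarith
    qed
    ultimately show ?thesis by (metis of_real_eq_0_iff less_irrefl)
  qed
  define iv where "iv = (\<lambda>y. 1 / s y)"
  have ivA: "iv \<in> CK K" using sA spos unfolding iv_def CK_def mem_Collect_eq
    by (intro continuous_on_divide continuous_on_const) auto
  have "\<phi> (\<lambda>y. s y * iv y) = \<phi> s * \<phi> iv" by (rule char_props(4)[OF \<phi> sA ivA])
  moreover have "\<phi> (\<lambda>y. s y * iv y) = \<phi> (\<lambda>y. 1)"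
  proof (rule char_props(1)[OF \<phi>])
    show "(\<lambda>y. s y * iv y) \<in> CK K" using sA ivA unfolding CK_def mem_Collect_eq by (intro continuous_on_mult) auto
  qed (use spos one in \<open>auto simp: iv_def\<close>)
  ultimately show False using s0 char_props(5)[OF \<phi>] by simp
qed

lemma CK_spectrum:
  fixes h :: "'m::finite \<Rightarrow> complex^'n \<Rightarrow> complex"
  assumes K: "compact K" "K \<noteq> {}" and h: "\<And>i. h i \<in> CK K"
  shows "joint_spectrum K (CK K) h = (\<lambda>z. \<chi> i. h i z) ` K"
proof (intro equalityI subsetI)
  fix x assume "x \<in> joint_spectrum K (CK K) h"
  then obtain \<phi> where \<phi>: "\<phi> \<in> characters K (CK K)" "x = (\<chi> i. \<phi> (h i))"
    by (auto simp: joint_spectrum_def)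
  obtain z where "z \<in> K" "\<forall>g\<in>CK K. \<phi> g = g z" using CK_char_point[OF K \<phi>(1)] by blast
  then show "x \<in> (\<lambda>z. \<chi> i. h i z) ` K" using \<phi>(2) h by auto
next
  fix x assume "x \<in> (\<lambda>z. \<chi> i. h i z) ` K"
  then obtain z where z: "z \<in> K" "x = (\<chi> i. h i z)" by auto
  have "(\<lambda>g. g z) \<in> characters K (CK K)" using z(1) by (simp add: characters_def)
  then show "x \<in> joint_spectrum K (CK K) h" using z(2) by (auto simp: joint_spectrum_def)
qed


lemma poly_cont: "p \<in> polyfun \<Longrightarrow> continuous_on S p"
  by (induction rule: polyfun.induct)
     (auto intro!: continuous_on_add continuous_on_mult continuous_on_const continuous_on_component continuous_on_id)

lemma poly_smult: "p \<in> polyfun \<Longrightarrow> (\<lambda>z. c * p z) \<in> polyfun"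
  using polyfun.mult[OF polyfun.const] by blast

lemma poly_diff: "p \<in> polyfun \<Longrightarrow> q \<in> polyfun \<Longrightarrow> (\<lambda>z. p z - q z) \<in> polyfun"
proof -
  assume p: "p \<in> polyfun" and q: "q \<in> polyfun"
  have "(\<lambda>z. p z + (-1) * q z) \<in> polyfun" by (intro polyfun.add p poly_smult q)
  then show ?thesis by simp
qed

lemma PK_iff: "f \<in> PK K \<longleftrightarrow> (\<exists>p. (\<forall>k. p k \<in> polyfun) \<and> uniform_limit K p f sequentially)"
  unfolding PK_def uniform_limit_sequentially_iff dist_norm by auto

lemma PK_cont: "f \<in> PK K \<Longrightarrow> continuous_on K f"
proof -
  assume "f \<in> PK K"
  then obtain p where p: "\<forall>k. p k \<in> polyfun" "uniform_limit K p f sequentially"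
    unfolding PK_iff by blast
  show ?thesis
    by (rule uniform_limit_theorem[OF _ p(2)]) (use p(1) poly_cont in \<open>auto intro: always_eventually\<close>)
qed

lemma PK_bounded: "compact K \<Longrightarrow> f \<in> PK K \<Longrightarrow> bounded (f ` K)"
  by (intro compact_imp_bounded compact_continuous_image PK_cont)

lemma PK_poly: "p \<in> polyfun \<Longrightarrow> p \<in> PK K"
  unfolding PK_iff by (intro exI[of _ "\<lambda>k. p"]) (auto intro: uniform_limit_const)

lemma PK_one: "(\<lambda>z. c) \<in> PK K"
  by (intro PK_poly polyfun.const)

lemma PK_add: "f \<in> PK K \<Longrightarrow> g \<in> PK K \<Longrightarrow> (\<lambda>z. f z + g z) \<in> PK K"
  unfolding PK_iff
proof (elim exE conjE)
  fix p q assume "\<forall>k. p k \<in> polyfun" "uniform_limit K p f sequentially"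
    "\<forall>k. q k \<in> polyfun" "uniform_limit K q g sequentially"
  then show "\<exists>r. (\<forall>k. r k \<in> polyfun) \<and> uniform_limit K r (\<lambda>z. f z + g z) sequentially"
    by (intro exI[of _ "\<lambda>k z. p k z + q k z"]) (auto intro: polyfun.add uniform_limit_add)
qed

lemma PK_mult: "compact K \<Longrightarrow> f \<in> PK K \<Longrightarrow> g \<in> PK K \<Longrightarrow> (\<lambda>z. f z * g z) \<in> PK K"
proof -
  assume K: "compact K" and f: "f \<in> PK K" and g: "g \<in> PK K"
  have bf: "bounded (f ` K)" and bg: "bounded (g ` K)" using PK_bounded K f g by auto
  from f g obtain p q where "\<forall>k. p k \<in> polyfun" "uniform_limit K p f sequentially"
    "\<forall>k. q k \<in> polyfun" "uniform_limit K q g sequentially" unfolding PK_iff by blast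
  then show ?thesis unfolding PK_iff
    by (intro exI[of _ "\<lambda>k z. p k z * q k z"]) (auto intro: polyfun.mult uniform_lim_mult bf bg)
qed

lemma PK_smult: "f \<in> PK K \<Longrightarrow> (\<lambda>z. c * f z) \<in> PK K"
proof -
  assume f: "f \<in> PK K"
  from f obtain p where "\<forall>k. p k \<in> polyfun" "uniform_limit K p f sequentially"
    unfolding PK_iff by blast
  then show ?thesis unfolding PK_iff
    by (intro exI[of _ "\<lambda>k z. c * p k z"])
       (auto intro: poly_smult bounded_linear.uniform_limit[OF bounded_linear_mult_right])
qed

lemma PK_closed:
  assumes g: "\<And>k. g k \<in> PK K" and ul: "uniform_limit K g f sequentially"
  shows "f \<in> PK K"
proof -
  have "\<forall>k. \<exists>q. q \<in> polyfun \<and> (\<forall>z\<in>K. dist (q z) (g k z) < 1 / Suc k)"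
  proof
    fix k
    obtain p where p: "\<forall>j. p j \<in> polyfun" "uniform_limit K p (g k) sequentially"
      using g[of k] unfolding PK_iff by blast
    obtain N where "\<forall>n\<ge>N. \<forall>z\<in>K. dist (p n z) (g k z) < 1 / Suc k"
      using p(2) unfolding uniform_limit_sequentially_iff by (meson of_nat_0_less_iff zero_less_Suc divide_pos_pos zero_less_one)
    then show "\<exists>q. q \<in> polyfun \<and> (\<forall>z\<in>K. dist (q z) (g k z) < 1 / Suc k)"
      using p(1) by blast
  qed
  then obtain q where q: "\<And>k. q k \<in> polyfun" "\<And>k z. z \<in> K \<Longrightarrow> dist (q k z) (g k z) < 1 / Suc k"
    by metis
  have "uniform_limit K q f sequentially"
    unfolding uniform_limit_sequentially_iff
  proof (intro allI impI)
    fix e :: real assume e: "e > 0"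
    obtain N1 where N1: "\<forall>n\<ge>N1. \<forall>z\<in>K. dist (g n z) (f z) < e/2"
      using ul e unfolding uniform_limit_sequentially_iff by (meson half_gt_zero)
    obtain N2 :: nat where N2: "1 / Suc N2 < e/2"
      using reals_Archimedean[of "e/2"] e by (auto simp: inverse_eq_divide)
    show "\<exists>N. \<forall>n\<ge>N. \<forall>z\<in>K. dist (q n z) (f z) < e"
    proof (intro exI allI impI ballI)
      fix n z assume n: "max N1 N2 \<le> n" and z: "z \<in> K"
      have "1 / real (Suc n) \<le> 1 / Suc N2" using n by (intro divide_left_mono) auto
      then have "dist (q n z) (g n z) < e/2" using q(2)[OF z, of n] N2 by linarith
      moreover have "dist (g n z) (f z) < e/2" using N1 n z by auto
      ultimately show "dist (q n z) (f z) < e" using dist_triangle[of "q n z" "f z" "g n z"] by linarith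
    qed
  qed
  then show ?thesis unfolding PK_iff using q(1) by blast
qed


definition QC :: "complex set" where "QC = (\<lambda>(a,b). Complex a b) ` (\<rat> \<times> \<rat>)"

lemma QC_countable: "countable QC"
  unfolding QC_def by (intro countable_image countable_SIGMA countable_rat)

lemma QC_dense: "e > 0 \<Longrightarrow> \<exists>c'\<in>QC. cmod (c - c') < e"
proof -
  assume e: "e > 0"
  obtain a where a: "a \<in> \<rat>" "Re c - e/2 < a" "a < Re c" using Rats_dense_in_real[of "Re c - e/2" "Re c"] e by auto
  obtain b where b: "b \<in> \<rat>" "Im c - e/2 < b" "b < Im c" using Rats_dense_in_real[of "Im c - e/2" "Im c"] e by auto
  have "cmod (c - Complex a b) \<le> \<bar>Re (c - Complex a b)\<bar> + \<bar>Im (c - Complex a b)\<bar>" by (rule cmod_le)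
  also have "\<dots> < e" using a b by simp
  finally show ?thesis using a b by (auto simp: QC_def)
qed

fun lev :: "nat \<Rightarrow> (complex^'n \<Rightarrow> complex) set" where
  "lev 0 = (\<lambda>c. \<lambda>z. c) ` QC \<union> range (\<lambda>i. \<lambda>z. z $ i)"
| "lev (Suc k) = lev k \<union> (\<lambda>(p,q). \<lambda>z. p z + q z) ` (lev k \<times> lev k) \<union> (\<lambda>(p,q). \<lambda>z. p z * q z) ` (lev k \<times> lev k)"

definition PQ :: "(complex^'n \<Rightarrow> complex) set" where "PQ = (\<Union>k. lev k)"

lemma lev_countable: "countable (lev k)"
  by (induction k) (auto intro!: countable_image countable_SIGMA QC_countable)

lemma PQ_countable: "countable PQ"
  unfolding PQ_def by (intro countable_UN lev_countable) auto

lemma lev_poly: "lev k \<subseteq> polyfun"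
  by (induction k) (auto intro: polyfun.intros)

lemma PQ_poly: "PQ \<subseteq> polyfun"
  unfolding PQ_def using lev_poly by blast

lemma lev_mono: "k \<le> l \<Longrightarrow> lev k \<subseteq> lev l"
  by (induction l) (auto simp: le_Suc_eq)

lemma PQ_add: "p \<in> PQ \<Longrightarrow> q \<in> PQ \<Longrightarrow> (\<lambda>z. p z + q z) \<in> PQ"
proof -
  assume "p \<in> PQ" "q \<in> PQ"
  then obtain k l where "p \<in> lev k" "q \<in> lev l" unfolding PQ_def by blast
  then have "p \<in> lev (max k l)" "q \<in> lev (max k l)" using lev_mono[of k "max k l"] lev_mono[of l "max k l"] by auto
  then have "(\<lambda>z. p z + q z) \<in> lev (Suc (max k l))" by force
  then show ?thesis unfolding PQ_def by blast
qed

lemma PQ_mult: "p \<in> PQ \<Longrightarrow> q \<in> PQ \<Longrightarrow> (\<lambda>z. p z * q z) \<in> PQ"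
proof -
  assume "p \<in> PQ" "q \<in> PQ"
  then obtain k l where "p \<in> lev k" "q \<in> lev l" unfolding PQ_def by blast
  then have "p \<in> lev (max k l)" "q \<in> lev (max k l)" using lev_mono[of k "max k l"] lev_mono[of l "max k l"] by auto
  then have "(\<lambda>z. p z * q z) \<in> lev (Suc (max k l))" by force
  then show ?thesis unfolding PQ_def by blast
qed

lemma PQ_ne: "PQ \<noteq> {}"
  unfolding PQ_def by (auto intro!: exI[of _ 0])

lemma bounded_bound:
  assumes "compact K" "continuous_on K p"
  obtains B where "B \<ge> 0" "\<And>z. z \<in> K \<Longrightarrow> cmod (p z) \<le> B"
proof -
  have "bounded (p ` K)" by (intro compact_imp_bounded compact_continuous_image assms)
  then obtain B where "B > 0" "\<And>z. z \<in> K \<Longrightarrow> norm (p z) \<le> B" unfolding bounded_pos by auto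
  then show ?thesis using that[of B] by auto
qed

lemma PQ_dense_poly:
  assumes K: "compact K" and p: "p \<in> polyfun"
  shows "\<forall>e>0. \<exists>q\<in>PQ. \<forall>z\<in>K. cmod (p z - q z) < e"
  using p
proof (induction rule: polyfun.induct)
  case (const c)
  show ?case
  proof (intro allI impI)
    fix e :: real assume "e > 0"
    then obtain c' where "c' \<in> QC" "cmod (c - c') < e" using QC_dense by blast
    moreover have "(\<lambda>z. c') \<in> PQ" using \<open>c' \<in> QC\<close> unfolding PQ_def by (auto intro!: exI[of _ 0])
    ultimately show "\<exists>q\<in>PQ. \<forall>z\<in>K. cmod (c - q z) < e" by auto
  qed
next
  case (coord i)
  have "(\<lambda>z. z $ i) \<in> PQ" unfolding PQ_def by (auto intro!: exI[of _ 0])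
  then show ?case by (auto intro!: bexI[of _ "\<lambda>z. z $ i"])
next
  case (add p q)
  show ?case
  proof (intro allI impI)
    fix e :: real assume e: "e > 0"
    obtain p' where p': "p' \<in> PQ" "\<forall>z\<in>K. cmod (p z - p' z) < e/2" using add.IH(1) e by (meson half_gt_zero)
    obtain q' where q': "q' \<in> PQ" "\<forall>z\<in>K. cmod (q z - q' z) < e/2" using add.IH(2) e by (meson half_gt_zero)
    have "\<forall>z\<in>K. cmod (p z + q z - (p' z + q' z)) < e"
    proof
      fix z assume z: "z \<in> K"
      have "cmod (p z + q z - (p' z + q' z)) \<le> cmod (p z - p' z) + cmod (q z - q' z)"
        by (metis add_diff_add norm_triangle_ineq)
      then show "cmod (p z + q z - (p' z + q' z)) < e" using p'(2) q'(2) z by fastforce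
    qed
    then show "\<exists>r\<in>PQ. \<forall>z\<in>K. cmod (p z + q z - r z) < e"
      using PQ_add[OF p'(1) q'(1)] by (intro bexI[of _ "\<lambda>z. p' z + q' z"]) auto
  qed
next
  case (mult p q)
  obtain Bp where Bp: "Bp \<ge> 0" "\<And>z. z \<in> K \<Longrightarrow> cmod (p z) \<le> Bp"
    using bounded_bound[OF K poly_cont[OF mult.hyps(1)]] by blast
  obtain Bq where Bq: "Bq \<ge> 0" "\<And>z. z \<in> K \<Longrightarrow> cmod (q z) \<le> Bq"
    using bounded_bound[OF K poly_cont[OF mult.hyps(2)]] by blast
  show ?case
  proof (intro allI impI)
    fix e :: real assume e: "e > 0"
    define d where "d = min 1 (e / (2 * (Bp + Bq + 1)))"
    have pos: "Bp + Bq + 1 > 0" using Bp Bq by linarith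
    have d12: "d > 0" "d \<le> 1" using e pos by (auto simp: d_def)
    have "d * (Bp + Bq + 1) \<le> e / (2 * (Bp + Bq + 1)) * (Bp + Bq + 1)"
      using pos by (intro mult_right_mono) (auto simp: d_def)
    also have "\<dots> = e/2" using pos by (simp add: field_simps)
    finally have d: "d > 0" "d \<le> 1" "d * (Bp + Bq + 1) \<le> e/2" using d12 by auto
    obtain p' where p': "p' \<in> PQ" "\<forall>z\<in>K. cmod (p z - p' z) < d" using mult.IH(1) d by blast
    obtain q' where q': "q' \<in> PQ" "\<forall>z\<in>K. cmod (q z - q' z) < d" using mult.IH(2) d by blast
    have "\<forall>z\<in>K. cmod (p z * q z - p' z * q' z) < e"
    proof
      fix z assume z: "z \<in> K"
      have q'b: "cmod (q' z) \<le> Bq + 1"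
        using q'(2) z Bq(2)[OF z] d(2) norm_triangle_ineq2[of "q' z" "q z"]
        by (smt (verit) norm_minus_commute)
      have eq: "p z * q z - p' z * q' z = p z * (q z - q' z) + (p z - p' z) * q' z"
        by (simp add: algebra_simps)
      have "cmod (p z * q z - p' z * q' z) \<le> cmod (p z) * cmod (q z - q' z) + cmod (p z - p' z) * cmod (q' z)"
        unfolding eq by (metis norm_mult norm_triangle_ineq)
      also have "\<dots> \<le> Bp * d + d * (Bq + 1)"
        using z p'(2) q'(2) Bp Bq q'b d(1)
        by (intro add_mono mult_mono) auto
      also have "\<dots> = d * (Bp + Bq + 1)" by (simp add: algebra_simps)
      also have "\<dots> < e" using d e by linarith
      finally show "cmod (p z * q z - p' z * q' z) < e" .
    qed
    then show "\<exists>r\<in>PQ. \<forall>z\<in>K. cmod (p z * q z - r z) < e"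
      using PQ_mult[OF p'(1) q'(1)] by (intro bexI[of _ "\<lambda>z. p' z * q' z"]) auto
  qed
qed

lemma PQ_dense_PK:
  assumes K: "compact K" and f: "f \<in> PK K" and e: "e > 0"
  shows "\<exists>q\<in>PQ. \<forall>z\<in>K. cmod (f z - q z) < e"
proof -
  obtain p where p: "\<forall>k. p k \<in> polyfun" "uniform_limit K p f sequentially"
    using f unfolding PK_iff by blast
  obtain N where N: "\<forall>z\<in>K. dist (p N z) (f z) < e/2"
    using p(2) e unfolding uniform_limit_sequentially_iff by (meson half_gt_zero order_refl)
  obtain q where q: "q \<in> PQ" "\<forall>z\<in>K. cmod (p N z - q z) < e/2"
    using PQ_dense_poly[OF K, of "p N"] p(1) e by (meson half_gt_zero)
  have "\<forall>z\<in>K. cmod (f z - q z) < e"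
  proof
    fix z assume z: "z \<in> K"
    have "cmod (f z - q z) \<le> cmod (f z - p N z) + cmod (p N z - q z)"
      using norm_triangle_ineq[of "f z - p N z" "p N z - q z"] by simp
    also have "\<dots> < e"
    proof -
      have "cmod (f z - p N z) < e/2" using N z by (simp add: dist_norm norm_minus_commute)
      moreover have "cmod (p N z - q z) < e/2" using q(2) z by blast
      ultimately show ?thesis by linarith
    qed
    finally show "cmod (f z - q z) < e" .
  qed
  then show ?thesis using q(1) by blast
qed


lemma PK_pow: "compact K \<Longrightarrow> f \<in> PK K \<Longrightarrow> (\<lambda>z. (f z)^i) \<in> PK K"
  by (induction i) (auto intro: PK_mult PK_one)

lemma PK_sum:
  assumes "\<And>i. t i \<in> PK K" shows "(\<lambda>z. \<Sum>i<(n::nat). t i z) \<in> PK K"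
proof (induct n)
  case 0 then show ?case using PK_one[of 0 K] by simp
next
  case (Suc n) then show ?case using PK_add[OF Suc assms[of n]] by simp
qed

lemma char_bound:
  assumes K: "compact K" "K \<noteq> {}" and \<phi>: "\<phi> \<in> characters K (PK K)"
    and f: "f \<in> PK K" and B: "\<And>z. z \<in> K \<Longrightarrow> cmod (f z) \<le> B"
  shows "cmod (\<phi> f) \<le> B"
proof (rule ccontr)
  assume "\<not> cmod (\<phi> f) \<le> B"
  then have lB: "cmod (\<phi> f) > B" by simp
  define l where "l = \<phi> f"
  have B0: "B \<ge> 0" using K(2) B by (meson all_not_in_conv norm_ge_zero order_trans)
  have l0: "l \<noteq> 0" "cmod l > 0" using lB B0 by (auto simp: l_def)
  define r where "r = B / cmod l"
  have r: "r \<ge> 0" "r < 1" using B0 lB l0 by (auto simp: r_def l_def field_simps)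
  define t where "t i z = inverse l * (inverse l * f z)^i" for i z
  have tPK: "t i \<in> PK K" for i
    unfolding t_def by (intro PK_smult PK_pow[OF K(1)] f)
  have cb: "cmod (inverse l * f z) \<le> r" if "z \<in> K" for z
  proof -
    have "cmod (inverse l * f z) = cmod (f z) / cmod l"
      by (simp add: norm_mult norm_inverse divide_inverse mult.commute)
    also have "\<dots> \<le> B / cmod l" using B[OF that] l0 by (intro divide_right_mono) auto
    finally show ?thesis by (simp add: r_def)
  qed
  have tb: "norm (t i z) \<le> inverse (cmod l) * r^i" if "z \<in> K" for i z
    unfolding t_def norm_mult norm_power norm_inverse
    by (intro mult_left_mono power_mono) (use cb[OF that] in \<open>auto simp: norm_mult norm_inverse\<close>)
  have sm: "summable (\<lambda>i. inverse (cmod l) * r^i)"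
    using r by (intro summable_mult summable_geometric) auto
  have ul: "uniform_limit K (\<lambda>n z. \<Sum>i<n. t i z) (\<lambda>z. suminf (\<lambda>i. t i z)) sequentially"
    by (rule Weierstrass_m_test[OF tb sm])
  define g where "g = (\<lambda>z. suminf (\<lambda>i. t i z))"
  have gPK: "g \<in> PK K" unfolding g_def
    by (rule PK_closed[OF _ ul]) (intro PK_sum tPK)
  have gval: "(l - f z) * g z = 1" if z: "z \<in> K" for z
  proof -
    have c1: "norm (inverse l * f z) < 1" using cb[OF z] r by linarith
    have "(\<lambda>i. inverse l * (inverse l * f z)^i) sums (inverse l * (1 / (1 - inverse l * f z)))"
      by (intro sums_mult geometric_sums c1)
    then have "g z = inverse l * (1 / (1 - inverse l * f z))"
      by (simp add: g_def t_def sums_iff)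
    moreover have "l - f z \<noteq> 0" using B[OF z] lB by (auto simp: l_def)
    ultimately show ?thesis using l0 by (simp add: field_simps)
  qed
  have one: "(\<lambda>z. 1) \<in> PK K" by (rule PK_one)
  have a: "(\<lambda>z. l * 1) \<in> PK K" by (rule PK_one)
  have b: "(\<lambda>z. (-1) * f z) \<in> PK K" by (rule PK_smult[OF f])
  define hm where "hm = (\<lambda>z. l * 1 + (-1) * f z)"
  have hmPK: "hm \<in> PK K" unfolding hm_def by (rule PK_add[OF a b])
  have "\<phi> hm = \<phi> (\<lambda>z. l * 1) + \<phi> (\<lambda>z. (-1) * f z)"
    unfolding hm_def by (rule char_props(2)[OF \<phi> a b])
  also have "\<dots> = l * \<phi> (\<lambda>z. 1) + (-1) * \<phi> f"
    using char_props(3)[OF \<phi> one, of l] char_props(3)[OF \<phi> f, of "-1"] by simp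
  also have "\<dots> = 0" using char_props(5)[OF \<phi>] by (simp add: l_def)
  finally have hm0: "\<phi> hm = 0" .
  have "\<phi> (\<lambda>z. hm z * g z) = \<phi> hm * \<phi> g" by (rule char_props(4)[OF \<phi> hmPK gPK])
  moreover have "\<phi> (\<lambda>z. hm z * g z) = \<phi> (\<lambda>z. 1)"
    by (rule char_props(1)[OF \<phi> PK_mult[OF K(1) hmPK gPK] one]) (use gval in \<open>auto simp: hm_def\<close>)
  ultimately show False using hm0 char_props(5)[OF \<phi>] by simp
qed


definition hatK :: "(complex^'n) set \<Rightarrow> (complex^'n) set" where
  "hatK K = {w. \<forall>p\<in>polyfun. \<forall>B. (\<forall>z\<in>K. cmod (p z) \<le> B) \<longrightarrow> cmod (p w) \<le> B}"

definition apx :: "(complex^'n) set \<Rightarrow> (complex^'n \<Rightarrow> complex) \<Rightarrow> nat \<Rightarrow> complex^'n \<Rightarrow> complex" where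
  "apx K f = (SOME p. (\<forall>k. p k \<in> polyfun) \<and> uniform_limit K p f sequentially)"

definition ext :: "(complex^'n) set \<Rightarrow> (complex^'n \<Rightarrow> complex) \<Rightarrow> complex^'n \<Rightarrow> complex" where
  "ext K f w = lim (\<lambda>k. apx K f k w)"

lemma hatK_bound: "w \<in> hatK K \<Longrightarrow> p \<in> polyfun \<Longrightarrow> (\<And>z. z \<in> K \<Longrightarrow> cmod (p z) \<le> B) \<Longrightarrow> cmod (p w) \<le> B"
  unfolding hatK_def by blast

lemma hatK_sub: "K \<subseteq> hatK K"
  unfolding hatK_def by auto

lemma poly_closed_le:
  assumes "p \<in> polyfun" shows "closed {w. cmod (p w) \<le> B}"
proof -
  have c: "continuous_on UNIV p" by (rule poly_cont[OF assms])
  show ?thesis by (intro closed_Collect_le continuous_on_norm continuous_on_const c)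
qed

lemma hatK_compact:
  assumes K: "compact K"
  shows "compact (hatK K)"
proof -
  have cl: "closed (hatK K)"
  proof -
    have eqh: "hatK K = (\<Inter>pB\<in>{(p,B). p \<in> polyfun \<and> (\<forall>z\<in>K. cmod (p z) \<le> B)}. {w. cmod (fst pB w) \<le> snd pB})"
      unfolding hatK_def by auto
    have "closed (\<Inter>pB\<in>{(p,B). p \<in> polyfun \<and> (\<forall>z\<in>K. cmod (p z) \<le> B)}. {w. cmod (fst pB w) \<le> snd pB})"
      by (rule closed_INT) (auto intro: poly_closed_le)
    then show ?thesis using eqh by simp
  qed
  have "\<forall>i. \<exists>B. \<forall>z\<in>K. cmod (z $ i) \<le> B"
  proof
    fix i
    obtain B where "B \<ge> 0" "\<And>z. z \<in> K \<Longrightarrow> cmod (z $ i) \<le> B"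
      using bounded_bound[OF K, of "\<lambda>z. z $ i"] poly_cont[OF polyfun.coord] by blast
    then show "\<exists>B. \<forall>z\<in>K. cmod (z $ i) \<le> B" by blast
  qed
  then obtain Bi where Bi: "\<And>i z. z \<in> K \<Longrightarrow> cmod (z $ i) \<le> Bi i" by metis
  have "norm w \<le> (\<Sum>i\<in>UNIV. Bi i)" if w: "w \<in> hatK K" for w
  proof -
    have wi: "cmod (w $ i) \<le> Bi i" for i
      by (rule hatK_bound[OF w polyfun.coord Bi])
    have "norm w = L2_set (\<lambda>i. norm (w $ i)) UNIV" by (simp add: norm_vec_def)
    also have "\<dots> \<le> (\<Sum>i\<in>UNIV. norm (w $ i))" by (rule L2_set_le_sum) simp
    also have "\<dots> \<le> (\<Sum>i\<in>UNIV. Bi i)" by (intro sum_mono wi)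
    finally show ?thesis .
  qed
  then have "bounded (hatK K)" unfolding bounded_iff by blast
  with cl show ?thesis by (simp add: compact_eq_bounded_closed)
qed

lemma apx:
  assumes "f \<in> PK K"
  shows "\<forall>k. apx K f k \<in> polyfun" "uniform_limit K (apx K f) f sequentially"
proof -
  have "\<exists>p. (\<forall>k. p k \<in> polyfun) \<and> uniform_limit K p f sequentially" using assms unfolding PK_iff .
  then have "(\<forall>k. apx K f k \<in> polyfun) \<and> uniform_limit K (apx K f) f sequentially"
    unfolding apx_def by (rule someI_ex)
  then show "\<forall>k. apx K f k \<in> polyfun" "uniform_limit K (apx K f) f sequentially" by auto
qed

lemma two_seq_close:
  assumes p: "\<forall>k. p k \<in> polyfun" "uniform_limit K p f sequentially"
    and q: "\<forall>k. q k \<in> polyfun" "uniform_limit K q g sequentially"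
    and w: "w \<in> hatK K"
    and fg: "\<And>z. z \<in> K \<Longrightarrow> cmod (f z - g z) \<le> B" and e: "e > 0"
  shows "\<exists>N. \<forall>m\<ge>N. \<forall>n\<ge>N. cmod (p m w - q n w) \<le> B + e"
proof -
  obtain N1 where N1: "\<forall>n\<ge>N1. \<forall>z\<in>K. dist (p n z) (f z) < e/2"
    using p(2) half_gt_zero[OF e] unfolding uniform_limit_sequentially_iff by blast
  obtain N2 where N2: "\<forall>n\<ge>N2. \<forall>z\<in>K. dist (q n z) (g z) < e/2"
    using q(2) half_gt_zero[OF e] unfolding uniform_limit_sequentially_iff by blast
  show ?thesis
  proof (intro exI allI impI)
    fix m n assume m: "max N1 N2 \<le> m" and n: "max N1 N2 \<le> n"
    show "cmod (p m w - q n w) \<le> B + e"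
    proof (rule hatK_bound[OF w poly_diff])
      show "p m \<in> polyfun" "q n \<in> polyfun" using p q by auto
      fix z assume z: "z \<in> K"
      have eq: "p m z - q n z = ((p m z - f z) + (f z - g z)) + (g z - q n z)" by simp
      have t1: "cmod (((p m z - f z) + (f z - g z)) + (g z - q n z)) \<le> cmod ((p m z - f z) + (f z - g z)) + cmod (g z - q n z)"
        by (rule norm_triangle_ineq)
      have t2: "cmod ((p m z - f z) + (f z - g z)) \<le> cmod (p m z - f z) + cmod (f z - g z)"
        by (rule norm_triangle_ineq)
      have "cmod (p m z - q n z) \<le> cmod (p m z - f z) + cmod (f z - g z) + cmod (g z - q n z)"
        unfolding eq using t1 t2 by linarith
      moreover have "cmod (p m z - f z) < e/2" using N1 m z by (simp add: dist_norm)
      moreover have "cmod (g z - q n z) < e/2" using N2 n z by (simp add: dist_norm norm_minus_commute)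
      ultimately show "cmod (p m z - q n z) \<le> B + e" using fg[OF z] by linarith
    qed
  qed
qed

lemma poly_seq_convergent:
  assumes p: "\<forall>k. p k \<in> polyfun" "uniform_limit K p f sequentially" and w: "w \<in> hatK K"
  shows "convergent (\<lambda>k. p k w)"
proof -
  have "Cauchy (\<lambda>k. p k w)"
  proof (rule metric_CauchyI)
    fix e :: real assume e: "e > 0"
    have e2: "e/2 > 0" using e by simp
    obtain N where N: "\<forall>m\<ge>N. \<forall>n\<ge>N. cmod (p m w - p n w) \<le> 0 + e/2"
      using two_seq_close[OF p p w _ e2, of 0] by auto
    show "\<exists>M. \<forall>m\<ge>M. \<forall>n\<ge>M. dist (p m w) (p n w) < e"
    proof (intro exI[of _ N] allI impI)
      fix m n assume "N \<le> m" "N \<le> n"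
      then have "cmod (p m w - p n w) \<le> e/2" using N by simp
      then show "dist (p m w) (p n w) < e" using e by (simp add: dist_norm)
    qed
  qed
  then show ?thesis by (simp add: Cauchy_convergent_iff)
qed

lemma ext_tendsto:
  assumes f: "f \<in> PK K" and p: "\<forall>k. p k \<in> polyfun" "uniform_limit K p f sequentially"
    and w: "w \<in> hatK K"
  shows "(\<lambda>k. p k w) \<longlonglongrightarrow> ext K f w"
proof -
  have a: "(\<lambda>k. apx K f k w) \<longlonglongrightarrow> ext K f w"
    unfolding ext_def using poly_seq_convergent[OF apx[OF f] w] by (simp add: convergent_LIMSEQ_iff)
  have d: "(\<lambda>k. p k w - apx K f k w) \<longlonglongrightarrow> 0"
    unfolding LIMSEQ_iff
  proof (intro allI impI)
    fix e :: real assume e: "e > 0"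
    have e2: "e/2 > 0" using e by simp
    obtain N where N: "\<forall>m\<ge>N. \<forall>n\<ge>N. cmod (p m w - apx K f n w) \<le> 0 + e/2"
      using two_seq_close[OF p apx[OF f] w _ e2, of 0] by auto
    show "\<exists>N. \<forall>n\<ge>N. norm (p n w - apx K f n w - 0) < e"
    proof (intro exI allI impI)
      fix n assume "N \<le> n"
      then have "cmod (p n w - apx K f n w) \<le> e/2" using N by simp
      then show "norm (p n w - apx K f n w - 0) < e" using e by simp
    qed
  qed
  have "(\<lambda>k. (p k w - apx K f k w) + apx K f k w) \<longlonglongrightarrow> 0 + ext K f w"
    by (intro tendsto_add d a)
  then show ?thesis by simp
qed

lemma ext_bound:
  assumes f: "f \<in> PK K" and g: "g \<in> PK K" and w: "w \<in> hatK K"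
    and fg: "\<And>z. z \<in> K \<Longrightarrow> cmod (f z - g z) \<le> B"
  shows "cmod (ext K f w - ext K g w) \<le> B"
proof (rule field_le_epsilon)
  fix e :: real assume e: "e > 0"
  have lim: "(\<lambda>k. cmod (apx K f k w - apx K g k w)) \<longlonglongrightarrow> cmod (ext K f w - ext K g w)"
    by (intro tendsto_norm tendsto_diff ext_tendsto[OF f apx[OF f] w] ext_tendsto[OF g apx[OF g] w])
  obtain N where N: "\<forall>m\<ge>N. \<forall>n\<ge>N. cmod (apx K f m w - apx K g n w) \<le> B + e"
    using two_seq_close[OF apx[OF f] apx[OF g] w fg e] by blast
  show "cmod (ext K f w - ext K g w) \<le> B + e"
  proof (rule LIMSEQ_le_const2[OF lim])
    show "\<exists>N. \<forall>n\<ge>N. cmod (apx K f n w - apx K g n w) \<le> B + e"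
    proof (intro exI[of _ N] allI impI)
      fix n assume "N \<le> n" then show "cmod (apx K f n w - apx K g n w) \<le> B + e" using N by simp
    qed
  qed
qed

lemma ext_poly:
  assumes p: "p \<in> polyfun" and w: "w \<in> hatK K"
  shows "ext K p w = p w"
proof -
  have "(\<lambda>k. p w) \<longlonglongrightarrow> ext K p w"
  proof (rule ext_tendsto[OF PK_poly[OF p] _ _ w])
    show "uniform_limit K (\<lambda>k. p) p sequentially" by (rule uniform_limit_const)
  qed (use p in auto)
  then show ?thesis by (simp add: LIMSEQ_const_iff)
qed

lemma ext_add:
  assumes f: "f \<in> PK K" and g: "g \<in> PK K" and w: "w \<in> hatK K"
  shows "ext K (\<lambda>z. f z + g z) w = ext K f w + ext K g w"
proof -
  have r: "\<forall>k. (\<lambda>z. apx K f k z + apx K g k z) \<in> polyfun"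
    using apx(1)[OF f] apx(1)[OF g] by (auto intro: polyfun.add)
  have u: "uniform_limit K (\<lambda>k z. apx K f k z + apx K g k z) (\<lambda>z. f z + g z) sequentially"
    by (intro uniform_limit_add apx(2)[OF f] apx(2)[OF g])
  have "(\<lambda>k. apx K f k w + apx K g k w) \<longlonglongrightarrow> ext K (\<lambda>z. f z + g z) w"
    using ext_tendsto[OF PK_add[OF f g] r u w] by simp
  moreover have "(\<lambda>k. apx K f k w + apx K g k w) \<longlonglongrightarrow> ext K f w + ext K g w"
    by (intro tendsto_add ext_tendsto[OF f apx[OF f] w] ext_tendsto[OF g apx[OF g] w])
  ultimately show ?thesis by (rule LIMSEQ_unique)
qed

lemma ext_mult:
  assumes K: "compact K" and f: "f \<in> PK K" and g: "g \<in> PK K" and w: "w \<in> hatK K"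
  shows "ext K (\<lambda>z. f z * g z) w = ext K f w * ext K g w"
proof -
  have r: "\<forall>k. (\<lambda>z. apx K f k z * apx K g k z) \<in> polyfun"
    using apx(1)[OF f] apx(1)[OF g] by (auto intro: polyfun.mult)
  have u: "uniform_limit K (\<lambda>k z. apx K f k z * apx K g k z) (\<lambda>z. f z * g z) sequentially"
    by (intro uniform_lim_mult apx(2)[OF f] apx(2)[OF g] PK_bounded[OF K f] PK_bounded[OF K g])
  have "(\<lambda>k. apx K f k w * apx K g k w) \<longlonglongrightarrow> ext K (\<lambda>z. f z * g z) w"
    using ext_tendsto[OF PK_mult[OF K f g] r u w] by simp
  moreover have "(\<lambda>k. apx K f k w * apx K g k w) \<longlonglongrightarrow> ext K f w * ext K g w"
    by (intro tendsto_mult ext_tendsto[OF f apx[OF f] w] ext_tendsto[OF g apx[OF g] w])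
  ultimately show ?thesis by (rule LIMSEQ_unique)
qed


lemma ext_char:
  assumes K: "compact K" and w: "w \<in> hatK K"
  shows "(\<lambda>g. ext K g w) \<in> characters K (PK K)"
  unfolding characters_def
proof (intro CollectI conjI ballI allI impI)
  fix f g assume f: "f \<in> PK K" and g: "g \<in> PK K" and eq: "\<forall>z\<in>K. f z = g z"
  have "cmod (ext K f w - ext K g w) \<le> 0" by (rule ext_bound[OF f g w]) (use eq in auto)
  then show "ext K f w = ext K g w" by simp
next
  fix f g assume f: "f \<in> PK K" and g: "g \<in> PK K"
  show "ext K (\<lambda>z. f z + g z) w = ext K f w + ext K g w" by (rule ext_add[OF f g w])
  show "ext K (\<lambda>z. f z * g z) w = ext K f w * ext K g w" by (rule ext_mult[OF K f g w])
next
  fix f c assume f: "f \<in> PK K"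
  have "ext K (\<lambda>z. (\<lambda>z. c) z * f z) w = ext K (\<lambda>z. c) w * ext K f w"
    by (rule ext_mult[OF K PK_one f w])
  moreover have "ext K (\<lambda>z. c) w = c" by (subst ext_poly[OF polyfun.const w]) (rule refl)
  ultimately show "ext K (\<lambda>z. c * f z) w = c * ext K f w" by simp
next
  show "ext K (\<lambda>z. 1) w = 1" by (subst ext_poly[OF polyfun.const w]) (rule refl)
qed


lemma char_poly:
  assumes \<phi>: "\<phi> \<in> characters K (PK K)" and p: "p \<in> polyfun"
  shows "\<phi> p = p (\<chi> j. \<phi> (\<lambda>z. z $ j))"
  using p
proof (induction rule: polyfun.induct)
  case (const c) show ?case by (rule char_const[OF \<phi> PK_one])
next
  case (coord i) show ?case by simp
next
  case (add p q)
  have "\<phi> (\<lambda>z. p z + q z) = \<phi> p + \<phi> q" by (rule char_props(2)[OF \<phi> PK_poly[OF add.hyps(1)] PK_poly[OF add.hyps(2)]])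
  then show ?case using add.IH by simp
next
  case (mult p q)
  have "\<phi> (\<lambda>z. p z * q z) = \<phi> p * \<phi> q" by (rule char_props(4)[OF \<phi> PK_poly[OF mult.hyps(1)] PK_poly[OF mult.hyps(2)]])
  then show ?case using mult.IH by simp
qed

lemma char_ext:
  assumes K: "compact K" "K \<noteq> {}" and \<phi>: "\<phi> \<in> characters K (PK K)"
  defines "w \<equiv> (\<chi> j. \<phi> (\<lambda>z. z $ j))"
  shows "w \<in> hatK K" and "\<And>f. f \<in> PK K \<Longrightarrow> \<phi> f = ext K f w"
proof -
  show w: "w \<in> hatK K"
    unfolding hatK_def
  proof (intro CollectI ballI allI impI)
    fix p B assume p: "p \<in> polyfun" and B: "\<forall>z\<in>K. cmod (p z) \<le> B"
    have "cmod (\<phi> p) \<le> B" by (rule char_bound[OF K \<phi> PK_poly[OF p]]) (use B in auto)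
    then show "cmod (p w) \<le> B" using char_poly[OF \<phi> p] by (simp add: w_def)
  qed
  fix f assume f: "f \<in> PK K"
  have lim: "(\<lambda>k. apx K f k w) \<longlonglongrightarrow> ext K f w" by (rule ext_tendsto[OF f apx[OF f] w])
  have "(\<lambda>k. apx K f k w) \<longlonglongrightarrow> \<phi> f"
    unfolding LIMSEQ_iff
  proof (intro allI impI)
    fix e :: real assume e: "e > 0"
    have e2: "e/2 > 0" using e by simp
    obtain N where N: "\<forall>n\<ge>N. \<forall>z\<in>K. dist (apx K f n z) (f z) < e/2"
      using apx(2)[OF f] e2 unfolding uniform_limit_sequentially_iff by blast
    show "\<exists>N. \<forall>n\<ge>N. norm (apx K f n w - \<phi> f) < e"
    proof (intro exI[of _ N] allI impI)
      fix n assume n: "N \<le> n"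
      have pn: "apx K f n \<in> polyfun" using apx(1)[OF f] by blast
      have a: "(\<lambda>z. (-1) * apx K f n z) \<in> PK K" by (intro PK_smult PK_poly pn)
      have dPK: "(\<lambda>z. f z + (-1) * apx K f n z) \<in> PK K" by (rule PK_add[OF f a])
      have "\<phi> (\<lambda>z. f z + (-1) * apx K f n z) = \<phi> f + \<phi> (\<lambda>z. (-1) * apx K f n z)"
        by (rule char_props(2)[OF \<phi> f a])
      also have "\<phi> (\<lambda>z. (-1) * apx K f n z) = (-1) * \<phi> (apx K f n)"
        by (rule char_props(3)[OF \<phi> PK_poly[OF pn]])
      also have "\<phi> (apx K f n) = apx K f n w" using char_poly[OF \<phi> pn] by (simp add: w_def)
      finally have eqd: "\<phi> (\<lambda>z. f z + (-1) * apx K f n z) = \<phi> f - apx K f n w" by simp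
      have "cmod (\<phi> (\<lambda>z. f z + (-1) * apx K f n z)) \<le> e/2"
      proof (rule char_bound[OF K \<phi> dPK])
        fix z assume "z \<in> K"
        then have "dist (apx K f n z) (f z) < e/2" using N n by blast
        then show "cmod (f z + (-1) * apx K f n z) \<le> e/2" by (simp add: dist_norm norm_minus_commute)
      qed
      then have "cmod (apx K f n w - \<phi> f) \<le> e/2" using eqd by (simp add: norm_minus_commute)
      then show "norm (apx K f n w - \<phi> f) < e" using e by simp
    qed
  qed
  then show "\<phi> f = ext K f w" using lim by (rule LIMSEQ_unique)
qed

lemma ext_cont:
  assumes K: "compact K" and f: "f \<in> PK K"
  shows "continuous_on (hatK K) (ext K f)"
proof (rule uniform_limit_theorem)
  show "\<forall>\<^sub>F n in sequentially. continuous_on (hatK K) (apx K f n)"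
    using apx(1)[OF f] by (auto intro: always_eventually poly_cont)
  show "uniform_limit (hatK K) (apx K f) (ext K f) sequentially"
    unfolding uniform_limit_sequentially_iff
  proof (intro allI impI)
    fix e :: real assume e: "e > 0"
    have e2: "e/2 > 0" using e by simp
    obtain N where N: "\<forall>n\<ge>N. \<forall>z\<in>K. dist (apx K f n z) (f z) < e/2"
      using apx(2)[OF f] e2 unfolding uniform_limit_sequentially_iff by blast
    show "\<exists>N. \<forall>n\<ge>N. \<forall>w\<in>hatK K. dist (apx K f n w) (ext K f w) < e"
    proof (intro exI[of _ N] allI impI ballI)
      fix n w assume n: "N \<le> n" and w: "w \<in> hatK K"
      have pn: "apx K f n \<in> polyfun" using apx(1)[OF f] by blast
      have "cmod (ext K (apx K f n) w - ext K f w) \<le> e/2"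
      proof (rule ext_bound[OF PK_poly[OF pn] f w])
        fix z assume "z \<in> K"
        then have "dist (apx K f n z) (f z) < e/2" using N n by blast
        then show "cmod (apx K f n z - f z) \<le> e/2" by (simp add: dist_norm)
      qed
      then show "dist (apx K f n w) (ext K f w) < e"
        using ext_poly[OF pn w] e by (simp add: dist_norm)
    qed
  qed
qed simp

lemma PK_spectrum:
  fixes h :: "'m::finite \<Rightarrow> complex^'n \<Rightarrow> complex"
  assumes K: "compact K" "K \<noteq> {}" and h: "\<And>i. h i \<in> PK K"
  shows "joint_spectrum K (PK K) h = (\<lambda>w. \<chi> i. ext K (h i) w) ` hatK K"
proof (intro equalityI subsetI)
  fix x assume "x \<in> joint_spectrum K (PK K) h"
  then obtain \<phi> where \<phi>: "\<phi> \<in> characters K (PK K)" "x = (\<chi> i. \<phi> (h i))"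
    by (auto simp: joint_spectrum_def)
  show "x \<in> (\<lambda>w. \<chi> i. ext K (h i) w) ` hatK K"
    using char_ext[OF K \<phi>(1)] h \<phi>(2) by auto
next
  fix x assume "x \<in> (\<lambda>w. \<chi> i. ext K (h i) w) ` hatK K"
  then obtain w where w: "w \<in> hatK K" "x = (\<chi> i. ext K (h i) w)" by auto
  have "(\<lambda>g. ext K g w) \<in> characters K (PK K)" by (rule ext_char[OF K(1) w(1)])
  then show "x \<in> joint_spectrum K (PK K) h" using w(2) by (auto simp: joint_spectrum_def)
qed


lemma dense_le_extend:
  fixes g :: "'a::metric_space \<Rightarrow> real"
  assumes "compact K" "DK \<subseteq> K" "K \<subseteq> closure DK" "continuous_on K g"
    and "\<And>z. z \<in> DK \<Longrightarrow> g z \<le> c" and "z \<in> K"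
  shows "g z \<le> c"
proof -
  have cl: "closure DK \<subseteq> K" using assms by (simp add: closure_minimal compact_imp_closed)
  have "g ` closure DK \<subseteq> {..c}"
    by (rule image_closure_subset[OF continuous_on_subset[OF assms(4) cl]]) (use assms(5) in auto)
  then show ?thesis using assms(3,6) by auto
qed

lemma ext_meas:
  assumes K: "compact K" "K \<noteq> {}" and w: "w \<in> hatK K"
    and FA: "\<And>\<omega>. \<omega> \<in> space M \<Longrightarrow> F \<omega> \<in> PK K"
    and Fm: "\<And>z. z \<in> K \<Longrightarrow> (\<lambda>\<omega>. F \<omega> z) \<in> borel_measurable M"
  shows "(\<lambda>\<omega>. ext K (F \<omega>) w) \<in> borel_measurable M"
proof -
  obtain DK where DK: "countable DK" "DK \<subseteq> K" "K \<subseteq> closure DK"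
    using separable[of K] by blast
  define qe where "qe = from_nat_into (PQ :: (complex^'a \<Rightarrow> complex) set)"
  have qe: "range qe = PQ" unfolding qe_def by (intro range_from_nat_into PQ_ne PQ_countable)
  define P where "P k n \<omega> = (\<forall>z\<in>DK. cmod (F \<omega> z - qe n z) \<le> 1 / Suc k)" for k n \<omega>
  define sel where "sel k \<omega> = (LEAST n. P k n \<omega>)" for k \<omega>
  have Pm: "Measurable.pred M (P k n)" for k n
  proof -
    have "{\<omega> \<in> space M. P k n \<omega>} = space M \<inter> (\<Inter>z\<in>DK. {\<omega> \<in> space M. cmod (F \<omega> z - qe n z) \<le> 1 / Suc k})"
      by (auto simp: P_def)
    also have "\<dots> \<in> sets M"
    proof (intro sets.Int sets.top sets.countable_INT' DK(1) image_subsetI)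
      show "DK \<noteq> {}" using DK K(2) by auto
      fix z assume z: "z \<in> DK"
      have [measurable]: "(\<lambda>\<omega>. F \<omega> z) \<in> borel_measurable M" using Fm z DK by auto
      show "{\<omega> \<in> space M. cmod (F \<omega> z - qe n z) \<le> 1 / Suc k} \<in> sets M" by measurable
    qed
    finally show ?thesis unfolding pred_def .
  qed
  have selm: "sel k \<in> measurable M (count_space UNIV)" for k
    unfolding sel_def by (rule measurable_Least) (rule Pm)
  have am: "(\<lambda>\<omega>. qe (sel k \<omega>) w) \<in> borel_measurable M" for k
    by (rule measurable_compose_countable'[where f="\<lambda>n \<omega>. qe n w" and I=UNIV, OF _ selm]) auto
  have conv: "(\<lambda>k. qe (sel k \<omega>) w) \<longlonglongrightarrow> ext K (F \<omega>) w" if \<omega>: "\<omega> \<in> space M" for \<omega>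
  proof -
    have f: "F \<omega> \<in> PK K" by (rule FA[OF \<omega>])
    have bnd: "cmod (qe (sel k \<omega>) w - ext K (F \<omega>) w) \<le> 1 / Suc k" for k
    proof -
      have "\<exists>n. P k n \<omega>"
      proof -
        obtain q where q: "q \<in> PQ" "\<forall>z\<in>K. cmod (F \<omega> z - q z) < 1 / Suc k"
          using PQ_dense_PK[OF K(1) f, of "1 / Suc k"] by auto
        then obtain n where "q = qe n" using qe by auto
        then have "P k n \<omega>" using q(2) DK(2) by (force simp: P_def)
        then show ?thesis by blast
      qed
      then have Ps: "P k (sel k \<omega>) \<omega>" unfolding sel_def by (rule LeastI_ex)
      define q where "q = qe (sel k \<omega>)"
      have qp: "q \<in> polyfun" using qe PQ_poly unfolding q_def by auto
      have onK: "cmod (F \<omega> z - q z) \<le> 1 / Suc k" if z: "z \<in> K" for z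
      proof (rule dense_le_extend[OF K(1) DK(2,3) _ _ z, where g="\<lambda>z. cmod (F \<omega> z - q z)"])
        show "continuous_on K (\<lambda>z. cmod (F \<omega> z - q z))"
          by (intro continuous_on_norm continuous_on_diff PK_cont[OF f] poly_cont[OF qp])
        show "\<And>z. z \<in> DK \<Longrightarrow> cmod (F \<omega> z - q z) \<le> 1 / Suc k" using Ps by (simp add: P_def q_def)
      qed
      have "cmod (ext K q w - ext K (F \<omega>) w) \<le> 1 / Suc k"
        by (rule ext_bound[OF PK_poly[OF qp] f w]) (use onK in \<open>simp add: norm_minus_commute\<close>)
      then show ?thesis using ext_poly[OF qp w] by (simp add: q_def)
    qed
    have "(\<lambda>k. qe (sel k \<omega>) w - ext K (F \<omega>) w) \<longlonglongrightarrow> 0"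
    proof (rule Lim_null_comparison[OF _ LIMSEQ_inverse_real_of_nat])
      show "\<forall>\<^sub>F k in sequentially. norm (qe (sel k \<omega>) w - ext K (F \<omega>) w) \<le> inverse (real (Suc k))"
        using bnd by (intro always_eventually) (simp add: inverse_eq_divide)
    qed
    then have "(\<lambda>k. (qe (sel k \<omega>) w - ext K (F \<omega>) w) + ext K (F \<omega>) w) \<longlonglongrightarrow> 0 + ext K (F \<omega>) w"
      by (intro tendsto_add tendsto_const)
    then show ?thesis by simp
  qed
  show ?thesis by (rule borel_measurable_LIMSEQ_metric[OF am conv])
qed


theorem proposition6p8:
  fixes M :: "'w measure"
    and K :: "(complex^'n) set"
    and A :: "(complex^'n \<Rightarrow> complex) set"
    and f :: "'m::finite \<Rightarrow> 'w \<Rightarrow> complex^'n \<Rightarrow> complex"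
  assumes "compact K" and "K \<noteq> {}"
    and "A = CK K \<or> A = PK K"
    and "\<And>i \<omega>. \<omega> \<in> space M \<Longrightarrow> f i \<omega> \<in> A"
    and "\<And>i z. z \<in> K \<Longrightarrow> (\<lambda>\<omega>. f i \<omega> z) \<in> borel_measurable M"
  shows "random_compact_set M (\<lambda>\<omega>. joint_spectrum K A (\<lambda>i. f i \<omega>))"
  unfolding random_compact_set_def
proof -
  note K = assms(1,2)
  from assms(3) show "(\<lambda>\<omega>. joint_spectrum K A (\<lambda>i. f i \<omega>)) \<in> measurable M hausdorff_borel"
  proof
    assume A: "A = CK K"
    have eq: "joint_spectrum K A (\<lambda>i. f i \<omega>) = (\<lambda>z. \<chi> i. f i \<omega> z) ` K" if "\<omega> \<in> space M" for \<omega>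
      unfolding A by (rule CK_spectrum[OF K]) (use assms(4)[OF that] A in auto)
    have "(\<lambda>\<omega>. (\<lambda>z. \<chi> i. f i \<omega> z) ` K) \<in> measurable M hausdorff_borel"
    proof (rule image_measurable_hausdorff[OF K])
      fix \<omega> assume "\<omega> \<in> space M"
      then have "continuous_on K (f i \<omega>)" for i using assms(4) A by (auto simp: CK_def)
      then show "continuous_on K (\<lambda>z. \<chi> i. f i \<omega> z)" by (intro continuous_on_vec_lambda)
    next
      fix z assume "z \<in> K"
      then show "(\<lambda>\<omega>. \<chi> i. f i \<omega> z) \<in> borel_measurable M" by (intro vec_measurable assms(5))
    qed
    then show ?thesis by (subst measurable_cong[OF eq]) auto
  next
    assume A: "A = PK K"
    have eq: "joint_spectrum K A (\<lambda>i. f i \<omega>) = (\<lambda>w. \<chi> i. ext K (f i \<omega>) w) ` hatK K" if "\<omega> \<in> space M" for \<omega>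
      unfolding A by (rule PK_spectrum[OF K]) (use assms(4)[OF that] A in auto)
    have L: "compact (hatK K)" "hatK K \<noteq> {}" using hatK_compact[OF K(1)] hatK_sub[of K] K(2) by auto
    have "(\<lambda>\<omega>. (\<lambda>w. \<chi> i. ext K (f i \<omega>) w) ` hatK K) \<in> measurable M hausdorff_borel"
    proof (rule image_measurable_hausdorff[OF L])
      fix \<omega> assume "\<omega> \<in> space M"
      then have "continuous_on (hatK K) (ext K (f i \<omega>))" for i using assms(4) A ext_cont[OF K(1)] by auto
      then show "continuous_on (hatK K) (\<lambda>w. \<chi> i. ext K (f i \<omega>) w)" by (intro continuous_on_vec_lambda)
    next
      fix w assume w: "w \<in> hatK K"
      show "(\<lambda>\<omega>. \<chi> i. ext K (f i \<omega>) w) \<in> borel_measurable M"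
      proof (intro vec_measurable)
        fix i show "(\<lambda>\<omega>. ext K (f i \<omega>) w) \<in> borel_measurable M"
          by (rule ext_meas[OF K w]) (use assms(4,5) A in auto)
      qed
    qed
    then show ?thesis by (subst measurable_cong[OF eq]) auto
  qed
qed


end
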